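(* Let $m\in[0..\frac n2-1]$. Let $x$ be a random bit string in $\{0,1\}^n$ such that $x_i=1$ for all $i\in[1..2m+2]$ and the bits $x_i$, $i\in[2m+3..n]$, are independent and uniformly distributed in $\{0,1\}$. Then for any $\delta\in[0,2]$, $E[\mathrm{HLB}_\delta(x)]\le 2m+4$.
   Context: Let $n$ be an even positive integer. For $x\in\{0,1\}^n$ consider the blocks $(x_{2\ell+1},x_{2\ell+2})$, $\ell=0,\dots,\frac n2-1$. If $x\neq(1,\dots,1)$, let $m$ be the smallest $\ell$ with $x_{2\ell+1}\neq 1$ or $x_{2\ell+2}\neq 1$, and define $\mathrm{DLB}(x)=2m+1$ if $x_{2m+1}+x_{2m+2}=0$ and $\mathrm{DLB}(x)=2m$ if $x_{2m+1}+x_{2m+2}=1$; set $\mathrm{DLB}(1,\dots,1)=n$. For a real parameter $\delta$, $\mathrm{HLB}_\delta(x)=2m$ if $\mathrm{DLB}(x)=2m+1$, $\mathrm{HLB}_\delta(x)=2m+2-\delta$ if $\mathrm{DLB}(x)=2m$ (for $m\in\{0,\dots,\frac n2-1\}$), and $\mathrm{HLB}_\delta(x)=n$ if $\mathrm{DLB}(x)=n$. *)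

theory Defs
  imports "HOL-Probability.Probability"
begin

(* Bit strings in {0,1}^n are lists of naturals of length n with entries in {0,1};
   the paper's 1-based bit x_i is  xbit x i = x ! (i - 1). *)
definition bitstrings :: "nat \<Rightarrow> nat list set" where
  "bitstrings n = {x. length x = n \<and> set x \<subseteq> {0, 1}}"

definition xbit :: "nat list \<Rightarrow> nat \<Rightarrow> nat" where
  "xbit x i = x ! (i - 1)"

definition DLB :: "nat \<Rightarrow> nat list \<Rightarrow> nat" where
  "DLB n x =
     (if (\<forall>i\<in>{1..n}. xbit x i = 1) then n
      else (let m = (LEAST l. l < n div 2 \<and>
                       (xbit x (2*l+1) \<noteq> 1 \<or> xbit x (2*l+2) \<noteq> 1))
            in if xbit x (2*m+1) + xbit x (2*m+2) = 0 then 2*m+1 else 2*m))"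

definition HLB :: "nat \<Rightarrow> real \<Rightarrow> nat list \<Rightarrow> real" where
  "HLB n \<delta> x =
     (if DLB n x = n then real n
      else if odd (DLB n x) then real (DLB n x) - 1
      else real (DLB n x) + 2 - \<delta>)"

end

theory Submission
  imports Defs
begin

fun gg :: "real \<Rightarrow> nat list \<Rightarrow> real" where
  "gg d [] = 0"
| "gg d [a] = 0"
| "gg d (a # b # rest) =
     (if a = 1 \<and> b = 1 then 2 + gg d rest else if a + b = 0 then 0 else 2 - d)"

lemma bits_eq: "bitstrings k = {xs. set xs \<subseteq> {0,1} \<and> length xs = k}"
  unfolding bitstrings_def by auto

lemma bits_finite: "finite (bitstrings k)"
  unfolding bits_eq by (rule finite_lists_length_eq) simp

lemma bits_card: "card (bitstrings k) = 2 ^ k"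
  unfolding bits_eq by (simp add: card_lists_length_eq numeral_2_eq_2)

lemma bits_Suc: "bitstrings (Suc k) = (\<lambda>y. 0 # y) ` bitstrings k \<union> (\<lambda>y. 1 # y) ` bitstrings k"
proof
  show "bitstrings (Suc k) \<subseteq> (\<lambda>y. 0 # y) ` bitstrings k \<union> (\<lambda>y. 1 # y) ` bitstrings k"
  proof
    fix x assume "x \<in> bitstrings (Suc k)"
    then obtain a y where x: "x = a # y" and "a \<in> {0,1}" "y \<in> bitstrings k"
      unfolding bitstrings_def by (cases x) auto
    then show "x \<in> (\<lambda>y. 0 # y) ` bitstrings k \<union> (\<lambda>y. 1 # y) ` bitstrings k" by auto
  qed
qed (auto simp: bitstrings_def)

lemma sum_bits_Suc:
  "sum f (bitstrings (Suc k)) = sum (\<lambda>y. f (0 # y)) (bitstrings k) + sum (\<lambda>y. f (1 # y)) (bitstrings k)"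
proof -
  have "sum f (bitstrings (Suc k)) = sum f ((\<lambda>y. 0 # y) ` bitstrings k) + sum f ((\<lambda>y. 1 # y) ` bitstrings k)"
    unfolding bits_Suc by (rule sum.union_disjoint) (auto simp: bits_finite)
  also have "\<dots> = sum (\<lambda>y. f (0 # y)) (bitstrings k) + sum (\<lambda>y. f (1 # y)) (bitstrings k)"
    by (simp add: sum.reindex)
  finally show ?thesis .
qed

lemma T_bound:
  assumes "0 \<le> d"
  shows "sum (gg d) (bitstrings (2*j)) \<le> 2 * 4 ^ j"
proof (induction j)
  case 0
  have "bitstrings 0 = {[]}" unfolding bitstrings_def by auto
  then show ?case by simp
next
  case (Suc j)
  let ?B = "bitstrings (2*j)"
  have c: "real (card ?B) = 4 ^ j" by (simp add: bits_card power_mult)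
  have "2 * Suc j = Suc (Suc (2*j))" by simp
  then have "sum (gg d) (bitstrings (2 * Suc j)) =
     sum (\<lambda>y. gg d (0#0#y)) ?B + sum (\<lambda>y. gg d (0#1#y)) ?B
     + (sum (\<lambda>y. gg d (1#0#y)) ?B + sum (\<lambda>y. gg d (1#1#y)) ?B)"
    by (simp add: sum_bits_Suc)
  also have "\<dots> = (2 - d) * 4^j + ((2 - d) * 4^j + (2 * 4^j + sum (gg d) ?B))"
    by (simp add: sum.distrib c)
  also have "\<dots> \<le> 2 * 4 ^ Suc j"
  proof -
    have "0 \<le> d * 4^j" using assms by simp
    then show ?thesis using Suc by (simp add: algebra_simps)
  qed
  finally show ?case .
qed

lemma gg_prefix: "gg d (replicate (2*l) 1 @ y) = 2 * real l + gg d y"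
proof (induction l)
  case (Suc l)
  have "2 * Suc l = Suc (Suc (2*l))" by simp
  then show ?case using Suc by simp
qed simp

lemma HLB_gg:
  assumes x: "x \<in> bitstrings n" and ev: "even n"
  shows "HLB n d x = gg d x"
proof (cases "\<forall>i\<in>{1..n}. xbit x i = 1")
  case True
  have lx: "length x = n" using x by (simp add: bitstrings_def)
  have "x = replicate n 1"
  proof (rule nth_equalityI)
    fix i assume "i < length x"
    then have "xbit x (i+1) = 1" using True lx by auto
    then show "x ! i = replicate n 1 ! i" using \<open>i < length x\<close> lx by (simp add: xbit_def)
  qed (simp add: lx)
  moreover obtain q where "n = 2*q" using ev by blast
  ultimately have "gg d x = real n" using gg_prefix[of d q "[]"] by simp
  moreover have "DLB n x = n" using True by (simp add: DLB_def)
  ultimately show ?thesis by (simp add: HLB_def)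
next
  case False
  have lx: "length x = n" using x by (simp add: bitstrings_def)
  obtain i where i: "i \<in> {1..n}" "xbit x i \<noteq> 1" using False by blast
  define P where "P = (\<lambda>l. l < n div 2 \<and> (xbit x (2*l+1) \<noteq> 1 \<or> xbit x (2*l+2) \<noteq> 1))"
  have "P ((i-1) div 2)"
  proof -
    have "i = 2*((i-1) div 2)+1 \<or> i = 2*((i-1) div 2)+2" using i(1) by auto
    moreover have "(i-1) div 2 < n div 2" using i(1) ev by auto
    ultimately show ?thesis unfolding P_def using i(2) by auto
  qed
  define l where "l = (LEAST l. P l)"
  have Pl: "P l" unfolding l_def by (rule LeastI) fact
  have nP: "\<And>l'. l' < l \<Longrightarrow> \<not> P l'" unfolding l_def by (rule not_less_Least)
  have ln: "2*l+1 < n" using Pl ev unfolding P_def by auto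
  have tk: "take (2*l) x = replicate (2*l) 1"
  proof (rule nth_equalityI)
    fix k assume k: "k < length (take (2*l) x)"
    then have kl: "k < 2*l" by simp
    have "k div 2 < l" using kl by auto
    then have "\<not> P (k div 2)" by (rule nP)
    moreover have "k div 2 < n div 2" using kl ln by auto
    ultimately have "xbit x (2*(k div 2)+1) = 1 \<and> xbit x (2*(k div 2)+2) = 1" unfolding P_def by auto
    moreover have "k + 1 = 2*(k div 2)+1 \<or> k + 1 = 2*(k div 2)+2" by auto
    ultimately have "xbit x (k+1) = 1" by metis
    then show "take (2*l) x ! k = replicate (2*l) 1 ! k" using kl by (simp add: xbit_def)
  qed (use ln lx in simp)
  define a where "a = x ! (2*l)"
  define b where "b = x ! (2*l+1)"
  have d1: "drop (2*l) x = a # drop (Suc (2*l)) x"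
    unfolding a_def using ln lx by (simp add: Cons_nth_drop_Suc)
  have d2: "drop (Suc (2*l)) x = b # drop (2*l+2) x"
    unfolding b_def using ln lx by (simp add: Cons_nth_drop_Suc)
  have xs: "x = replicate (2*l) 1 @ a # b # drop (2*l+2) x"
    using tk d1 d2 by (metis append_take_drop_id)
  have ab: "xbit x (2*l+1) = a" "xbit x (2*l+2) = b" by (simp_all add: xbit_def a_def b_def)
  have nab: "\<not> (a = 1 \<and> b = 1)" using Pl ab unfolding P_def by auto
  have D0: "DLB n x = (if xbit x (2*l+1) + xbit x (2*l+2) = 0 then 2*l+1 else 2*l)"
    unfolding DLB_def if_not_P[OF False] Let_def l_def P_def by simp
  have D: "DLB n x = (if a + b = 0 then 2*l+1 else 2*l)" using D0 ab by simp
  have "gg d x = 2 * real l + (if a + b = 0 then 0 else 2 - d)"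
    by (subst xs, subst gg_prefix) (use nab in auto)
  then show ?thesis using D ln ev by (auto simp: HLB_def)
qed

theorem lemma6:
  fixes n m :: nat and \<delta> :: real
  assumes "even n" and "n > 0" and "m \<le> n div 2 - 1"
    and "0 \<le> \<delta>" and "\<delta> \<le> 2"
  shows "measure_pmf.expectation
           (pmf_of_set {x \<in> bitstrings n. \<forall>i\<in>{1..2*m+2}. xbit x i = 1})
           (HLB n \<delta>) \<le> 2 * real m + 4"
proof -
  define S where "S = {x \<in> bitstrings n. \<forall>i\<in>{1..2*m+2}. xbit x i = 1}"
  have j0: "n = 2*m+2 + 2*((n - (2*m+2)) div 2)" using assms(1,2,3) by auto
  obtain j where j: "n = 2*m+2 + 2*j" using j0 by blast
  let ?B = "bitstrings (2*j)"
  let ?f = "\<lambda>y. replicate (2*m+2) (1::nat) @ y"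
  have Sf: "S = ?f ` ?B"
  proof
    show "S \<subseteq> ?f ` ?B"
    proof
      fix x assume xS: "x \<in> S"
      then have lx: "length x = n" and bx: "set x \<subseteq> {0,1}" by (auto simp: S_def bitstrings_def)
      have "take (2*m+2) x = replicate (2*m+2) 1"
      proof (rule nth_equalityI)
        fix k assume k: "k < length (take (2*m+2) x)"
        then have "xbit x (k+1) = 1" using xS by (auto simp: S_def)
        moreover have "replicate (2*m+2) 1 ! k = (1::nat)" using k by (intro nth_replicate) simp
        ultimately show "take (2*m+2) x ! k = replicate (2*m+2) 1 ! k" using k by (simp add: xbit_def)
      qed (use lx j in simp)
      then have "x = ?f (drop (2*m+2) x)" by (metis append_take_drop_id)
      moreover have "drop (2*m+2) x \<in> ?B" using lx bx j
        by (auto simp: bitstrings_def dest: in_set_dropD)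
      ultimately show "x \<in> ?f ` ?B" by blast
    qed
  next
    show "?f ` ?B \<subseteq> S"
    proof
      fix x assume "x \<in> ?f ` ?B"
      then obtain y where y: "y \<in> ?B" "x = ?f y" by blast
      have "x \<in> bitstrings n" using y j by (auto simp: bitstrings_def)
      moreover have "\<forall>i\<in>{1..2*m+2}. xbit x i = 1"
      proof
        fix i assume i: "i \<in> {1..2*m+2}"
        let ?R = "replicate (2*m+2) (1::nat)"
        have il: "i - 1 < length ?R" using i by auto
        have "x ! (i-1) = ?R ! (i-1)" using y(2) il by (simp only: nth_append if_True)
        also have "\<dots> = 1" using il by (simp only: length_replicate nth_replicate)
        finally show "xbit x i = 1" by (simp add: xbit_def)
      qed
      ultimately show "x \<in> S" by (simp add: S_def)
    qed
  qed
  have inj: "inj_on ?f ?B" by (simp add: inj_on_def)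
  have cB: "card ?B = 4 ^ j" by (simp add: bits_card power_mult)
  have cS: "card S = 4 ^ j" using Sf inj cB card_image by metis
  have fin: "finite S" using Sf bits_finite by simp
  have ne: "S \<noteq> {}" using cS by auto
  have "sum (HLB n \<delta>) S = sum (gg \<delta>) S"
    by (rule sum.cong) (use HLB_gg assms(1) in \<open>auto simp: S_def\<close>)
  also have "\<dots> = sum (\<lambda>y. gg \<delta> (?f y)) ?B"
    unfolding Sf by (rule sum.reindex[OF inj, unfolded comp_def])
  also have "\<dots> = sum (\<lambda>y. 2 * real (m+1) + gg \<delta> y) ?B"
    by (rule sum.cong) (use gg_prefix[of \<delta> "m+1"] in auto)
  also have "\<dots> = 2 * real (m+1) * 4^j + sum (gg \<delta>) ?B"
    by (simp add: sum.distrib cB)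
  also have "\<dots> \<le> 2 * real (m+1) * 4^j + 2 * 4^j"
    using T_bound[OF assms(4)] by simp
  finally have "sum (HLB n \<delta>) S \<le> (2 * real m + 4) * 4^j" by (simp add: algebra_simps)
  then show ?thesis
    unfolding S_def[symmetric] using integral_pmf_of_set[OF ne fin] cS
    by (simp add: divide_le_eq)
qed

end
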